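(* In the setting described in the context, the workload dimension $d$ equals the number $L$ of buffer pools, and the $L\times I$ matrix $M$ with $M_{li}=1$ if $i\in\mathcal P_l$ and $M_{li}=0$ otherwise is a workload matrix.
   Context: Let $I\ge1$, $J\ge I$; each activity $j\in\{1,\dots,J\}$ has a server $s(j)$ and a buffer $b(j)$ in $\{1,\dots,I\}$, with $s(j)=b(j)=j$ for $j\le I$. Let $A_{ij}=\mathbf1\{s(j)=i\}$, $C_{ij}=\mathbf1\{b(j)=i\}$, $\lambda^*\in(0,\infty)^I$, $\mu_j^*=\lambda^*_{s(j)}$, $R_{ij}=\mu_j^*C_{ij}$, $\eta>0$, $q\in(0,1)^I$ with $\sum q_i=1$, $\nu=\eta q$; assume there is a unique $x^*\in\mathbb{R}^J$ with $x^*_j=\min\{\lambda^*_j,\nu_j\}$ for $j\le I$, $Rx^*=\nu$, $Ax^*=e$, $x^*\ge0$. Activity $j$ is basic if $x_j^*>0$; after relabeling the basic activities are $1,\dots,b$, and $H$, $B$ denote the $I\times b$ submatrices of $R$, $A$ formed by their first $b$ columns. Let $\mathcal N=\{Hy:By=0,\ y\in\mathbb{R}^b\}$ and $\mathcal M=\mathcal N^\perp\subseteq\mathbb{R}^I$; the workload dimension is $d=\dim\mathcal M$, and a workload matrix is any $d\times I$ matrix whose rows form a basis of $\mathcal M$. Buffers $i,i'$ communicate directly if there are basic $j,j'$ with $b(j)=i$, $b(j')=i'$, $s(j)=s(j')$; they communicate if linked by a finite chain of directly communicating buffers. The equivalence classes of communication are the buffer pools $\mathcal P_1,\dots,\mathcal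 P_L$. *)

theory Defs
  imports "HOL-Analysis.Analysis"
begin

text \<open>Buffers/servers are indexed by a finite type 'b (so I = CARD('b)), activities by a
finite type 'a (J = CARD('a)). The injection emb :: 'b => 'a identifies the first I
activities (activity j = i for j \<le> I) with the buffers: s(emb i) = bb(emb i) = i.\<close>

definition Amat :: "('a \<Rightarrow> 'b) \<Rightarrow> 'b \<Rightarrow> 'a \<Rightarrow> real" where
  "Amat s i j = (if s j = i then 1 else 0)"

definition Cmat :: "('a \<Rightarrow> 'b) \<Rightarrow> 'b \<Rightarrow> 'a \<Rightarrow> real" where
  "Cmat bb i j = (if bb j = i then 1 else 0)"

definition mu :: "('a \<Rightarrow> 'b) \<Rightarrow> ('b \<Rightarrow> real) \<Rightarrow> 'a \<Rightarrow> real" where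
  "mu s lam j = lam (s j)"

definition Rmat :: "('a \<Rightarrow> 'b) \<Rightarrow> ('a \<Rightarrow> 'b) \<Rightarrow> ('b \<Rightarrow> real) \<Rightarrow> 'b \<Rightarrow> 'a \<Rightarrow> real" where
  "Rmat s bb lam i j = mu s lam j * Cmat bb i j"

definition nu :: "real \<Rightarrow> ('b \<Rightarrow> real) \<Rightarrow> 'b \<Rightarrow> real" where
  "nu eta q i = eta * q i"

definition feasible ::
  "('a::finite \<Rightarrow> 'b::finite) \<Rightarrow> ('a \<Rightarrow> 'b) \<Rightarrow> ('b \<Rightarrow> 'a) \<Rightarrow> ('b \<Rightarrow> real) \<Rightarrow> real
   \<Rightarrow> ('b \<Rightarrow> real) \<Rightarrow> ('a \<Rightarrow> real) \<Rightarrow> bool" where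
  "feasible s bb emb lam eta q x \<longleftrightarrow>
     (\<forall>i. x (emb i) = min (lam i) (nu eta q i)) \<and>
     (\<forall>i. (\<Sum>j\<in>UNIV. Rmat s bb lam i j * x j) = nu eta q i) \<and>
     (\<forall>i. (\<Sum>j\<in>UNIV. Amat s i j * x j) = 1) \<and>
     (\<forall>j. 0 \<le> x j)"

definition basic :: "('a \<Rightarrow> real) \<Rightarrow> 'a set" where
  "basic x = {j. 0 < x j}"

text \<open>N = {H y : B y = 0}, where H, B are the columns of R, A for the basic activities.\<close>
definition Nspace ::
  "('a::finite \<Rightarrow> 'b::finite) \<Rightarrow> ('a \<Rightarrow> 'b) \<Rightarrow> ('b \<Rightarrow> real) \<Rightarrow> ('a \<Rightarrow> real) \<Rightarrow> (real^'b) set" where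
  "Nspace s bb lam x =
     {(\<chi> i. \<Sum>j\<in>basic x. Rmat s bb lam i j * y j) | y.
        \<forall>i. (\<Sum>j\<in>basic x. Amat s i j * y j) = 0}"

definition Mspace ::
  "('a::finite \<Rightarrow> 'b::finite) \<Rightarrow> ('a \<Rightarrow> 'b) \<Rightarrow> ('b \<Rightarrow> real) \<Rightarrow> ('a \<Rightarrow> real) \<Rightarrow> (real^'b) set" where
  "Mspace s bb lam x = orthogonal_comp (Nspace s bb lam x)"

definition workload_dim ::
  "('a::finite \<Rightarrow> 'b::finite) \<Rightarrow> ('a \<Rightarrow> 'b) \<Rightarrow> ('b \<Rightarrow> real) \<Rightarrow> ('a \<Rightarrow> real) \<Rightarrow> nat" where
  "workload_dim s bb lam x = dim (Mspace s bb lam x)"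

text \<open>A d x I matrix given by its rows W 0, ..., W (d-1) is a workload matrix iff its rows
form a basis of M (distinct, linearly independent, spanning M).\<close>
definition is_workload_matrix ::
  "('a::finite \<Rightarrow> 'b::finite) \<Rightarrow> ('a \<Rightarrow> 'b) \<Rightarrow> ('b \<Rightarrow> real) \<Rightarrow> ('a \<Rightarrow> real)
   \<Rightarrow> nat \<Rightarrow> (nat \<Rightarrow> real^'b) \<Rightarrow> bool" where
  "is_workload_matrix s bb lam x d W \<longleftrightarrow>
     d = workload_dim s bb lam x \<and>
     inj_on W {..<d} \<and> independent (W ` {..<d}) \<and>
     span (W ` {..<d}) = Mspace s bb lam x"

definition direct_comm :: "('a \<Rightarrow> 'b) \<Rightarrow> ('a \<Rightarrow> 'b) \<Rightarrow> ('a \<Rightarrow> real) \<Rightarrow> ('b \<times> 'b) set" where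
  "direct_comm s bb x = {(i, i'). \<exists>j j'. j \<in> basic x \<and> j' \<in> basic x \<and>
        bb j = i \<and> bb j' = i' \<and> s j = s j'}"

definition comm :: "('a \<Rightarrow> 'b) \<Rightarrow> ('a \<Rightarrow> 'b) \<Rightarrow> ('a \<Rightarrow> real) \<Rightarrow> ('b \<times> 'b) set" where
  "comm s bb x = (direct_comm s bb x)\<^sup>*"

definition buffer_pools :: "('a \<Rightarrow> 'b) \<Rightarrow> ('a \<Rightarrow> 'b) \<Rightarrow> ('a \<Rightarrow> real) \<Rightarrow> 'b set set" where
  "buffer_pools s bb x = UNIV // comm s bb x"

end

theory Submission imports Defs begin

lemma comm_equiv: "equiv UNIV (comm s bb x)"
proof -
  have "sym (direct_comm s bb x)"
  proof (rule symI)
    fix a b assume "(a, b) \<in> direct_comm s bb x"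
    then obtain j j' where "j \<in> basic x" "j' \<in> basic x" "bb j = a" "bb j' = b" "s j = s j'"
      unfolding direct_comm_def by auto
    then have "\<exists>ja jb. ja \<in> basic x \<and> jb \<in> basic x \<and> bb ja = b \<and> bb jb = a \<and> s ja = s jb"
      by metis
    then show "(b, a) \<in> direct_comm s bb x" unfolding direct_comm_def by simp
  qed
  then show ?thesis unfolding comm_def equiv_def
    by (simp add: refl_rtrancl sym_rtrancl trans_rtrancl)
qed

lemma M_const_direct:
  assumes lam_pos: "\<And>i. 0 < lam i"
    and w: "w \<in> Mspace s bb lam x" and d: "(i, i') \<in> direct_comm s bb x"
  shows "w $ i = w $ i'"
proof -
  obtain j j' where jj: "j \<in> basic x" "j' \<in> basic x" "bb j = i" "bb j' = i'" "s j = s j'"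
    using d unfolding direct_comm_def by auto
  show ?thesis
  proof (cases "j = j'")
    case True then show ?thesis using jj by simp
  next
    case False
    define y where "y = (\<lambda>k. (if k = j then 1 else 0) - (if k = j' then 1 else (0::real)))"
    have fin: "finite (basic x)" by simp
    have ey: "(\<Sum>k\<in>basic x. f k * y k) = f j - f j'" for f :: "_ \<Rightarrow> real"
    proof -
      have "(\<Sum>k\<in>basic x. f k * y k) = (\<Sum>k\<in>basic x. (if k = j then f k else 0)) - (\<Sum>k\<in>basic x. (if k = j' then f k else 0))"
        unfolding sum_subtractf[symmetric] by (rule sum.cong) (auto simp: y_def)
      also have "\<dots> = f j - f j'" using jj by (simp add: sum.delta)
      finally show ?thesis .
    qed
    have By: "\<forall>k. (\<Sum>j\<in>basic x. Amat s k j * y j) = 0"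
      using jj by (simp add: ey Amat_def)
    have "(\<chi> k. \<Sum>j\<in>basic x. Rmat s bb lam k j * y j) \<in> Nspace s bb lam x"
      unfolding Nspace_def using By by auto
    then have "(\<chi> k. \<Sum>j\<in>basic x. Rmat s bb lam k j * y j) \<bullet> w = 0"
      using w by (simp add: Mspace_def orthogonal_comp_def orthogonal_def)
    then have "(\<Sum>k\<in>UNIV. (Rmat s bb lam k j - Rmat s bb lam k j') * w $ k) = 0"
      by (simp add: inner_vec_def ey)
    moreover have "(\<Sum>k\<in>UNIV. (Rmat s bb lam k j - Rmat s bb lam k j') * w $ k) = (\<Sum>k\<in>UNIV. (if k = i then lam (s j) * w $ k else 0)) - (\<Sum>k\<in>UNIV. (if k = i' then lam (s j) * w $ k else 0))"
      unfolding sum_subtractf[symmetric] by (rule sum.cong) (use jj in \<open>auto simp: Rmat_def mu_def Cmat_def left_diff_distrib\<close>)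
    ultimately have "(\<Sum>k\<in>UNIV. (if k = i then lam (s j) * w $ k else 0)) - (\<Sum>k\<in>UNIV. (if k = i' then lam (s j) * w $ k else 0)) = 0"
      by simp
    then have "lam (s j) * w $ i = lam (s j) * w $ i'" by simp
    then show ?thesis using lam_pos[of "s j"] by simp
  qed
qed

lemma M_const:
  assumes lam_pos: "\<And>i. 0 < lam i"
    and w: "w \<in> Mspace s bb lam x" and d: "(i, i') \<in> comm s bb x"
  shows "w $ i = w $ i'"
  using d unfolding comm_def
  by (induction rule: rtrancl_induct) (use M_const_direct[OF lam_pos w] in auto)

definition ind :: "'b set \<Rightarrow> real^'b::finite" where
  "ind Q = (\<chi> i. if i \<in> Q then 1 else 0)"

lemma ind_in_M:
  assumes Q: "Q \<in> buffer_pools s bb x"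
  shows "ind Q \<in> Mspace s bb lam x"
proof -
  have eqv: "equiv UNIV (comm s bb x)" by (rule comm_equiv)
  define SQ where "SQ k = (\<exists>j\<in>basic x. s j = k \<and> bb j \<in> Q)" for k
  have key: "bb j \<in> Q \<longleftrightarrow> SQ (s j)" if "j \<in> basic x" for j
  proof
    assume "SQ (s j)"
    then obtain j' where j': "j' \<in> basic x" "s j' = s j" "bb j' \<in> Q" unfolding SQ_def by auto
    have "\<exists>ja jb. ja \<in> basic x \<and> jb \<in> basic x \<and> bb ja = bb j' \<and> bb jb = bb j \<and> s ja = s jb"
      using j' that by metis
    then have "(bb j', bb j) \<in> direct_comm s bb x" unfolding direct_comm_def by simp
    then have "(bb j', bb j) \<in> comm s bb x" unfolding comm_def by (rule r_into_rtrancl)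
    then show "bb j \<in> Q" using in_quotient_imp_closed[OF eqv Q[unfolded buffer_pools_def]] j' by blast
  qed (use that SQ_def in auto)
  show ?thesis unfolding Mspace_def orthogonal_comp_def orthogonal_def
  proof (intro CollectI ballI)
    fix v assume "v \<in> Nspace s bb lam x"
    then obtain y where v: "v = (\<chi> i. \<Sum>j\<in>basic x. Rmat s bb lam i j * y j)"
      and By: "\<forall>i. (\<Sum>j\<in>basic x. Amat s i j * y j) = 0" unfolding Nspace_def by auto
    have "v \<bullet> ind Q = (\<Sum>i\<in>UNIV. \<Sum>j\<in>basic x. Rmat s bb lam i j * y j * (if i \<in> Q then 1 else 0))"
      by (simp add: v ind_def inner_vec_def sum_distrib_right)
    also have "\<dots> = (\<Sum>j\<in>basic x. \<Sum>i\<in>UNIV. Rmat s bb lam i j * y j * (if i \<in> Q then 1 else 0))"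
      by (rule sum.swap)
    also have "\<dots> = (\<Sum>j\<in>basic x. (if SQ (s j) then lam (s j) * y j else 0))"
    proof (rule sum.cong[OF refl])
      fix j assume "j \<in> basic x"
      have "(\<Sum>i\<in>UNIV. Rmat s bb lam i j * y j * (if i \<in> Q then 1 else 0)) =
            (\<Sum>i\<in>UNIV. if i = bb j then (if bb j \<in> Q then lam (s j) * y j else 0) else 0)"
        by (rule sum.cong) (auto simp: Rmat_def mu_def Cmat_def)
      also have "\<dots> = (if SQ (s j) then lam (s j) * y j else 0)" using key[OF \<open>j \<in> basic x\<close>] by simp
      finally show "(\<Sum>i\<in>UNIV. Rmat s bb lam i j * y j * (if i \<in> Q then 1 else 0)) = (if SQ (s j) then lam (s j) * y j else 0)" .
    qed
    also have "\<dots> = (\<Sum>j\<in>basic x. \<Sum>k\<in>UNIV. (if SQ k then lam k else 0) * (Amat s k j * y j))"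
    proof (rule sum.cong[OF refl])
      fix j
      have "(\<Sum>k\<in>UNIV. (if SQ k then lam k else 0) * (Amat s k j * y j)) =
            (\<Sum>k\<in>UNIV. if k = s j then (if SQ (s j) then lam (s j) * y j else 0) else 0)"
        by (rule sum.cong) (auto simp: Amat_def)
      then show "(if SQ (s j) then lam (s j) * y j else 0) = (\<Sum>k\<in>UNIV. (if SQ k then lam k else 0) * (Amat s k j * y j))"
        by simp
    qed
    also have "\<dots> = (\<Sum>k\<in>UNIV. (if SQ k then lam k else 0) * (\<Sum>j\<in>basic x. Amat s k j * y j))"
      by (subst sum.swap) (simp add: sum_distrib_left)
    also have "\<dots> = 0" using By by simp
    finally show "v \<bullet> ind Q = 0" .
  qed
qed


lemma ind_inj: "inj ind"
proof (rule injI)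
  fix Q Q' :: "'b::finite set" assume "ind Q = ind Q'"
  then have "\<And>i. ind Q $ i = ind Q' $ i" by simp
  then have h: "\<And>i. (if i \<in> Q then 1 else 0 :: real) = (if i \<in> Q' then 1 else 0)"
    unfolding ind_def by simp
  show "Q = Q'"
  proof (rule set_eqI)
    fix i show "i \<in> Q \<longleftrightarrow> i \<in> Q'" using h[of i] by (auto split: if_splits)
  qed
qed

theorem lemma2:
  fixes s bb :: "'a::finite \<Rightarrow> 'b::finite"
    and emb :: "'b \<Rightarrow> 'a"
    and lam q :: "'b \<Rightarrow> real"
    and eta :: real
    and xs :: "'a \<Rightarrow> real"
  assumes emb_s: "\<And>i. s (emb i) = i"
    and emb_b: "\<And>i. bb (emb i) = i"
    and lam_pos: "\<And>i. 0 < lam i"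
    and eta_pos: "0 < eta"
    and q_pos: "\<And>i. 0 < q i" and q_lt1: "\<And>i. q i < 1"
    and q_sum: "(\<Sum>i\<in>UNIV. q i) = 1"
    and xs_feas: "feasible s bb emb lam eta q xs"
    and xs_unique: "\<And>x. feasible s bb emb lam eta q x \<Longrightarrow> x = xs"
  shows "workload_dim s bb lam xs = card (buffer_pools s bb xs) \<and>
         (\<forall>P. bij_betw P {..<card (buffer_pools s bb xs)} (buffer_pools s bb xs) \<longrightarrow>
            is_workload_matrix s bb lam xs (card (buffer_pools s bb xs))
              (\<lambda>l. \<chi> i. if i \<in> P l then 1 else 0))"
proof -
  define Pools where "Pools = buffer_pools s bb xs"
  define S where "S = ind ` Pools"
  have eqv: "equiv UNIV (comm s bb xs)" by (rule comm_equiv)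
  have PQ: "Pools = UNIV // comm s bb xs" unfolding Pools_def buffer_pools_def ..
  have fin: "finite Pools" by simp
  have indep: "independent S"
  proof (rule pairwise_orthogonal_independent)
    show "pairwise orthogonal S" unfolding pairwise_def S_def
    proof (clarify)
      fix Q Q' assume Q: "Q \<in> Pools" and Q': "Q' \<in> Pools" and ne: "ind Q \<noteq> ind Q'"
      then have "Q \<inter> Q' = {}" using quotient_disj[OF eqv, of Q Q'] PQ by auto
      then show "orthogonal (ind Q) (ind Q')"
        unfolding orthogonal_def inner_vec_def ind_def
        by (intro sum.neutral) auto
    qed
    show "0 \<notin> S"
    proof
      assume "0 \<in> S"
      then obtain Q where Q: "Q \<in> Pools" "ind Q = 0" unfolding S_def by auto
      have "Q \<noteq> {}" using in_quotient_imp_non_empty[OF eqv, of Q] Q(1) PQ by simp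
      then obtain i where "i \<in> Q" by auto
      then have "ind Q $ i = 1" unfolding ind_def by simp
      then show False using Q by simp
    qed
  qed
  have spanS: "span S = Mspace s bb lam xs"
  proof
    show "span S \<subseteq> Mspace s bb lam xs"
      unfolding Mspace_def
      by (rule span_minimal) (use ind_in_M[unfolded Mspace_def] in \<open>auto simp: S_def Pools_def subspace_orthogonal_comp\<close>)
  next
    show "Mspace s bb lam xs \<subseteq> span S"
    proof
      fix w assume w: "w \<in> Mspace s bb lam xs"
      define c where "c Q = w $ (SOME i. i \<in> Q)" for Q :: "'b set"
      have "w = (\<Sum>Q\<in>Pools. c Q *\<^sub>R ind Q)"
      proof (rule vec_eq_iff[THEN iffD2], rule allI)
        fix i
        have cls: "(i \<in> Q) = (Q = comm s bb xs `` {i})" if Qp: "Q \<in> Pools" for Q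
        proof
          assume iQ: "i \<in> Q"
          obtain z where z: "Q = comm s bb xs `` {z}" using Qp PQ by (metis quotientE)
          then have "(z, i) \<in> comm s bb xs" using iQ by simp
          then have "comm s bb xs `` {z} = comm s bb xs `` {i}"
            by (rule equiv_class_eq[OF eqv])
          then show "Q = comm s bb xs `` {i}" using z by simp
        next
          assume "Q = comm s bb xs `` {i}" then show "i \<in> Q"
            by (simp add: comm_def)
        qed
        have iP: "comm s bb xs `` {i} \<in> Pools" unfolding PQ by (rule quotientI) simp
        have "(\<Sum>Q\<in>Pools. c Q *\<^sub>R ind Q) $ i = (\<Sum>Q\<in>Pools. c Q * (if i \<in> Q then 1 else 0))"
          by (simp add: ind_def)
        also have "\<dots> = (\<Sum>Q\<in>Pools. if Q = comm s bb xs `` {i} then c Q else 0)"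
          by (rule sum.cong) (auto simp: cls)
        also have "\<dots> = c (comm s bb xs `` {i})" using iP fin by (simp add: sum.delta)
        also have "\<dots> = w $ i"
        proof -
          have "\<exists>k. k \<in> comm s bb xs `` {i}" by (rule exI[of _ i]) (simp add: comm_def)
          then have "(SOME k. k \<in> comm s bb xs `` {i}) \<in> comm s bb xs `` {i}" by (rule someI_ex)
          then have "(i, SOME k. k \<in> comm s bb xs `` {i}) \<in> comm s bb xs" by simp
          from M_const[OF lam_pos w this] show ?thesis unfolding c_def by simp
        qed
        finally show "w $ i = (\<Sum>Q\<in>Pools. c Q *\<^sub>R ind Q) $ i" by simp
      qed
      also have "\<dots> \<in> span S"
        by (intro span_sum span_scale span_base) (auto simp: S_def)
      finally show "w \<in> span S" .
    qed
  qed
  have cardS: "card S = card Pools" unfolding S_def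
    by (rule card_image) (meson ind_inj inj_on_subset subset_UNIV)
  have dimM: "workload_dim s bb lam xs = card Pools"
    unfolding workload_dim_def spanS[symmetric] dim_span dim_eq_card_independent[OF indep] cardS ..
  show ?thesis
  proof (intro conjI allI impI)
    show "workload_dim s bb lam xs = card (buffer_pools s bb xs)" using dimM Pools_def by simp
  next
    fix P assume bij: "bij_betw P {..<card (buffer_pools s bb xs)} (buffer_pools s bb xs)"
    have W: "(\<lambda>l. \<chi> i. if i \<in> P l then 1 else 0) = (\<lambda>l. ind (P l))"
      by (simp add: ind_def)
    have PP: "P ` {..<card Pools} = Pools" and injP: "inj_on P {..<card Pools}"
      using bij unfolding Pools_def bij_betw_def by auto
    have "(\<lambda>l. ind (P l)) ` {..<card Pools} = ind ` (P ` {..<card Pools})" by auto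
    then have img: "(\<lambda>l. ind (P l)) ` {..<card Pools} = S" unfolding S_def PP .
    have injI': "inj_on ind (P ` {..<card Pools})" using ind_inj by (rule inj_on_subset) simp
    have "inj_on (ind \<circ> P) {..<card Pools}" by (rule comp_inj_on[OF injP injI'])
    then have inj: "inj_on (\<lambda>l. ind (P l)) {..<card Pools}" by (simp add: o_def)
    show "is_workload_matrix s bb lam xs (card (buffer_pools s bb xs))
              (\<lambda>l. \<chi> i. if i \<in> P l then 1 else 0)"
      unfolding is_workload_matrix_def W Pools_def[symmetric]
      using dimM inj img indep spanS by simp
  qed
qed

end
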